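(* Let $p$ be a prime and let $G$ be a group of order $p^7$ and nilpotency class $4$ such that $\gamma_2(G)$ is elementary abelian of order $p^5$. Then $\operatorname{Z}(G) = \gamma_4(G)$, and this subgroup has order $p^2$.
   Context: $\gamma_i(G)$ denotes the $i$-th term of the lower central series of $G$ and $\operatorname{Z}(G)$ its center. *)

theory Defs
  imports "HOL-Algebra.Algebra"
begin

definition commutator_subgroup :: "('a, 'b) monoid_scheme \<Rightarrow> 'a set \<Rightarrow> 'a set \<Rightarrow> 'a set" where
  "commutator_subgroup G H K = generate G
     (\<Union>h \<in> H. \<Union>k \<in> K. { h \<otimes>\<^bsub>G\<^esub> k \<otimes>\<^bsub>G\<^esub> inv\<^bsub>G\<^esub> h \<otimes>\<^bsub>G\<^esub> inv\<^bsub>G\<^esub> k })"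

text \<open>Lower central series, indexed from 1: gamma G 1 = G, gamma G (i+1) = [gamma G i, G].
  The index 0 is a dummy and also set to G.\<close>
fun lower_central :: "('a, 'b) monoid_scheme \<Rightarrow> nat \<Rightarrow> 'a set" where
  "lower_central G 0 = carrier G"
| "lower_central G (Suc 0) = carrier G"
| "lower_central G (Suc (Suc n)) = commutator_subgroup G (lower_central G (Suc n)) (carrier G)"

definition group_center :: "('a, 'b) monoid_scheme \<Rightarrow> 'a set" where
  "group_center G = {z \<in> carrier G. \<forall>g \<in> carrier G. z \<otimes>\<^bsub>G\<^esub> g = g \<otimes>\<^bsub>G\<^esub> z}"

definition nilpotency_class :: "('a, 'b) monoid_scheme \<Rightarrow> nat \<Rightarrow> bool" where
  "nilpotency_class G c \<longleftrightarrow> lower_central G (Suc c) = {\<one>\<^bsub>G\<^esub>}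
      \<and> (\<forall>k. 1 \<le> k \<and> k \<le> c \<longrightarrow> lower_central G k \<noteq> {\<one>\<^bsub>G\<^esub>})"

definition elementary_abelian :: "('a, 'b) monoid_scheme \<Rightarrow> nat \<Rightarrow> 'a set \<Rightarrow> bool" where
  "elementary_abelian G p H \<longleftrightarrow> subgroup H G \<and> comm_group (G\<lparr>carrier := H\<rparr>)
      \<and> (\<forall>x \<in> H. x [^]\<^bsub>G\<^esub> p = \<one>\<^bsub>G\<^esub>)"

end

theory Submission
  imports Defs
begin

definition cm :: "('a, 'b) monoid_scheme \<Rightarrow> 'a \<Rightarrow> 'a \<Rightarrow> 'a" where
  "cm G x y = x \<otimes>\<^bsub>G\<^esub> y \<otimes>\<^bsub>G\<^esub> inv\<^bsub>G\<^esub> x \<otimes>\<^bsub>G\<^esub> inv\<^bsub>G\<^esub> y"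

context group begin

lemma canc1[simp]: "x \<in> carrier G \<Longrightarrow> y \<in> carrier G \<Longrightarrow> x \<otimes> (inv x \<otimes> y) = y"
  by (simp add: m_assoc[symmetric])
lemma canc2[simp]: "x \<in> carrier G \<Longrightarrow> y \<in> carrier G \<Longrightarrow> inv x \<otimes> (x \<otimes> y) = y"
  by (simp add: m_assoc[symmetric])

lemma cm_closed[simp]: "x \<in> carrier G \<Longrightarrow> y \<in> carrier G \<Longrightarrow> cm G x y \<in> carrier G"
  by (simp add: cm_def)

lemma cm_inv: "x \<in> carrier G \<Longrightarrow> y \<in> carrier G \<Longrightarrow> inv (cm G x y) = cm G y x"
  by (simp add: cm_def m_assoc inv_mult_group)

lemma cm_one_r[simp]: "x \<in> carrier G \<Longrightarrow> cm G x \<one> = \<one>"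
  by (simp add: cm_def)
lemma cm_one_l[simp]: "x \<in> carrier G \<Longrightarrow> cm G \<one> x = \<one>"
  by (simp add: cm_def)
lemma cm_self[simp]: "x \<in> carrier G \<Longrightarrow> cm G x x = \<one>"
  by (simp add: cm_def m_assoc)

lemma cm_eq_one: "x \<in> carrier G \<Longrightarrow> y \<in> carrier G \<Longrightarrow> cm G x y = \<one> \<longleftrightarrow> x \<otimes> y = y \<otimes> x"
proof -
  assume x: "x \<in> carrier G" and y: "y \<in> carrier G"
  have "cm G x y = (x \<otimes> y) \<otimes> inv (y \<otimes> x)" by (simp add: cm_def m_assoc inv_mult_group x y)
  then show ?thesis using x y
    by (metis inv_closed inv_inv m_closed r_inv inv_equality)
qed

lemma conj_cm: "s \<in> carrier G \<Longrightarrow> g \<in> carrier G \<Longrightarrow> g \<otimes> s \<otimes> inv g = inv (cm G s g) \<otimes> s"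
  by (simp add: cm_def m_assoc inv_mult_group)

lemma cm_mult_r: "n \<in> carrier G \<Longrightarrow> h1 \<in> carrier G \<Longrightarrow> h2 \<in> carrier G \<Longrightarrow>
   cm G n (h1 \<otimes> h2) = cm G n h1 \<otimes> (h1 \<otimes> cm G n h2 \<otimes> inv h1)"
  by (simp add: cm_def m_assoc inv_mult_group)

lemma cm_inv_r: "n \<in> carrier G \<Longrightarrow> h \<in> carrier G \<Longrightarrow>
   cm G n (inv h) = inv h \<otimes> inv (cm G n h) \<otimes> inv (inv h)"
  by (simp add: cm_def m_assoc inv_mult_group)

lemma pow_in_subgroup: "subgroup H G \<Longrightarrow> x \<in> H \<Longrightarrow> x [^] (k::nat) \<in> H"
  by (induct k) (auto simp: subgroup.one_closed subgroup.m_closed)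

lemma cs_gens_sub: "H \<subseteq> carrier G \<Longrightarrow>
   (\<Union>h \<in> H. \<Union>k \<in> carrier G. { h \<otimes> k \<otimes> inv h \<otimes> inv k }) \<subseteq> carrier G"
  by auto

lemma lc_carrier: "lower_central G n \<subseteq> carrier G"
proof (induct n rule: less_induct)
  case (less n)
  show ?case
  proof (cases n)
    case (Suc m) note m = this
    show ?thesis
    proof (cases m)
      case (Suc k)
      then show ?thesis using less[of m] m
        by (simp add: commutator_subgroup_def generate_incl[OF cs_gens_sub])
    qed (simp add: m)
  qed simp
qed

lemma lc_subgroup: "subgroup (lower_central G n) G"
proof (cases n)
  case (Suc m)
  then show ?thesis
  proof (cases m)
    case (Suc k)
    then show ?thesis using \<open>n = Suc m\<close> lc_carrier[of "Suc k"]
      by (simp add: commutator_subgroup_def generate_is_subgroup[OF cs_gens_sub])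
  qed (simp add: subgroup_self)
qed (simp add: subgroup_self)

lemma lc_comm: "h \<in> lower_central G (Suc n) \<Longrightarrow> g \<in> carrier G \<Longrightarrow> cm G h g \<in> lower_central G (Suc (Suc n))"
  by (auto simp: commutator_subgroup_def cm_def intro!: generate.incl)

lemma lc_mono: "lower_central G (Suc (Suc n)) \<subseteq> lower_central G (Suc n)"
proof (induct n)
  case 0
  then show ?case using lc_carrier[of 2] by (simp add: numeral_eq_Suc)
next
  case (Suc n)
  have "lower_central G (Suc (Suc (Suc n))) = generate G (\<Union>h \<in> lower_central G (Suc (Suc n)). \<Union>k \<in> carrier G. { h \<otimes> k \<otimes> inv h \<otimes> inv k })"
    by (simp add: commutator_subgroup_def)
  also have "\<dots> \<subseteq> generate G (\<Union>h \<in> lower_central G (Suc n). \<Union>k \<in> carrier G. { h \<otimes> k \<otimes> inv h \<otimes> inv k })"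
    by (rule mono_generate) (use Suc in blast)
  finally show ?case by (simp add: commutator_subgroup_def)
qed

lemma lc_min: assumes "subgroup S G" "\<And>h g. h \<in> lower_central G (Suc n) \<Longrightarrow> g \<in> carrier G \<Longrightarrow> cm G h g \<in> S"
  shows "lower_central G (Suc (Suc n)) \<subseteq> S"
  unfolding lower_central.simps commutator_subgroup_def
  by (rule generate_subgroup_incl) (use assms in \<open>auto simp: cm_def\<close>)

lemma normal_of_comm: assumes "subgroup S G" "\<And>s g. s \<in> S \<Longrightarrow> g \<in> carrier G \<Longrightarrow> cm G s g \<in> S"
  and "s \<in> S" "g \<in> carrier G" shows "g \<otimes> s \<otimes> inv g \<in> S"
proof -
  have sc: "s \<in> carrier G" using assms subgroup.mem_carrier by metis
  show ?thesis unfolding conj_cm[OF sc assms(4)]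
    using assms by (simp add: subgroup.m_closed subgroup.m_inv_closed)
qed

lemma lc_normal: "s \<in> lower_central G (Suc n) \<Longrightarrow> g \<in> carrier G \<Longrightarrow> g \<otimes> s \<otimes> inv g \<in> lower_central G (Suc n)"
  by (rule normal_of_comm[OF lc_subgroup]) (use lc_comm lc_mono in blast)+

lemma comm_gen: assumes S: "subgroup S G" and nS: "\<And>s g. s \<in> S \<Longrightarrow> g \<in> carrier G \<Longrightarrow> g \<otimes> s \<otimes> inv g \<in> S"
  and Xs: "Xs \<subseteq> carrier G" "generate G Xs = carrier G" and n: "n \<in> carrier G"
  and nx: "\<And>x. x \<in> Xs \<Longrightarrow> cm G n x \<in> S" and g: "g \<in> carrier G"
  shows "cm G n g \<in> S"
proof -
  let ?D = "{h \<in> carrier G. cm G n h \<in> S}"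
  have "subgroup ?D G"
  proof (rule subgroupI)
    show "?D \<noteq> {}" using n S by (auto intro!: exI[of _ \<one>] simp: subgroup.one_closed)
    fix h assume h: "h \<in> ?D"
    show "inv h \<in> ?D" using h n S nS[of "inv (cm G n h)" "inv h"]
      by (simp add: cm_inv_r subgroup.m_inv_closed)
  next
    fix h1 h2 assume h: "h1 \<in> ?D" "h2 \<in> ?D"
    show "h1 \<otimes> h2 \<in> ?D" using h n S nS[of "cm G n h2" h1]
      by (simp add: cm_mult_r subgroup.m_closed)
  qed auto
  then have "generate G Xs \<subseteq> ?D" by (rule generate_subgroup_incl[rotated]) (use nx Xs in auto)
  then show ?thesis using Xs g by auto
qed

lemma comm_gen2: assumes S: "subgroup S G" and nS: "\<And>s g. s \<in> S \<Longrightarrow> g \<in> carrier G \<Longrightarrow> g \<otimes> s \<otimes> inv g \<in> S"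
  and Xs: "Xs \<subseteq> carrier G" "generate G Xs = carrier G"
  and nx: "\<And>x y. x \<in> Xs \<Longrightarrow> y \<in> Xs \<Longrightarrow> cm G x y \<in> S" and g: "g \<in> carrier G" and h: "h \<in> carrier G"
  shows "cm G g h \<in> S"
proof -
  have 1: "cm G x k \<in> S" if "x \<in> Xs" "k \<in> carrier G" for x k
    by (rule comm_gen[OF S nS Xs]) (use that Xs nx in auto)
  have 2: "cm G k x \<in> S" if "x \<in> Xs" "k \<in> carrier G" for x k
    using 1[OF that] that Xs cm_inv[of x k] S by (metis subgroup.m_inv_closed subsetD)
  show ?thesis by (rule comm_gen[OF S nS Xs]) (use 2 g h in auto)
qed

end

definition spn :: "('a, 'b) monoid_scheme \<Rightarrow> 'a \<Rightarrow> 'a \<Rightarrow> 'a set \<Rightarrow> 'a set" where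
  "spn G x y H = {x [^]\<^bsub>G\<^esub> i \<otimes>\<^bsub>G\<^esub> y [^]\<^bsub>G\<^esub> j \<otimes>\<^bsub>G\<^esub> h | i j h. (i::nat) = i \<and> (j::nat) = j \<and> h \<in> H}"

locale elab = group G for G (structure) +
  fixes A and p :: nat
  assumes A_sub: "subgroup A G" and A_comm: "x \<in> A \<Longrightarrow> y \<in> A \<Longrightarrow> x \<otimes> y = y \<otimes> x"
    and A_exp: "x \<in> A \<Longrightarrow> x [^] p = \<one>" and p_gt: "1 < p"
begin

lemma A_car[simp]: "x \<in> A \<Longrightarrow> x \<in> carrier G"
  using A_sub subgroup.mem_carrier by metis

lemma A_m: "x \<in> A \<Longrightarrow> y \<in> A \<Longrightarrow> x \<otimes> y \<in> A"
  using A_sub subgroup.m_closed by metis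

lemma A_pow[simp]: "x \<in> A \<Longrightarrow> x [^] (k::nat) \<in> A"
  using A_sub pow_in_subgroup by metis

lemma A_one[simp]: "\<one> \<in> A"
  using A_sub subgroup.one_closed by metis

lemma A_lcomm: "x \<in> A \<Longrightarrow> y \<in> A \<Longrightarrow> z \<in> carrier G \<Longrightarrow> x \<otimes> (y \<otimes> z) = y \<otimes> (x \<otimes> z)"
  by (metis A_car A_comm m_assoc)

lemma pow_mod: "x \<in> A \<Longrightarrow> x [^] (k::nat) = x [^] (k mod p)"
proof -
  assume x: "x \<in> A"
  have "x [^] k = x [^] (p * (k div p) + k mod p)" by (metis mult_div_mod_eq)
  also have "\<dots> = (x [^] p) [^] (k div p) \<otimes> x [^] (k mod p)"
    using x by (simp only: nat_pow_mult[symmetric] nat_pow_pow A_car)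
  finally show ?thesis using x A_exp by simp
qed

lemma inv_pow: "x \<in> A \<Longrightarrow> inv x = x [^] (p - 1)"
proof -
  assume x: "x \<in> A"
  have "x [^] (p - 1) \<otimes> x = x [^] p" using p_gt x
    by (metis A_car Suc_diff_1 less_trans zero_less_one nat_pow_Suc)
  then show ?thesis using x A_exp by (metis A_car nat_pow_closed inv_equality)
qed

lemma A_pow_distrib: "x \<in> A \<Longrightarrow> y \<in> A \<Longrightarrow> (x \<otimes> y) [^] (k::nat) = x [^] k \<otimes> y [^] k"
  by (rule pow_mult_distrib) (auto simp: A_comm)

abbreviation sp where "sp \<equiv> spn G"

lemma sp_mem: "h \<in> H \<Longrightarrow> x [^] (i::nat) \<otimes> y [^] (j::nat) \<otimes> h \<in> sp x y H"
  unfolding spn_def by blast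

lemma sp_sub: "x \<in> A \<Longrightarrow> y \<in> A \<Longrightarrow> H \<subseteq> A \<Longrightarrow> sp x y H \<subseteq> A"
  unfolding spn_def by (auto intro!: A_m)

lemma sp_subgroup: assumes x: "x \<in> A" and y: "y \<in> A" and H: "subgroup H G" "H \<subseteq> A"
  shows "subgroup (sp x y H) G"
proof -
  have hA: "h \<in> A" if "h \<in> H" for h using that H by auto
  have mult: "a \<otimes> b \<in> sp x y H" if a: "a \<in> sp x y H" and b: "b \<in> sp x y H" for a b
  proof -
    obtain i j h where a': "a = x [^] (i::nat) \<otimes> y [^] (j::nat) \<otimes> h" "h \<in> H" using a unfolding spn_def by blast
    obtain i' j' h' where b': "b = x [^] (i'::nat) \<otimes> y [^] (j'::nat) \<otimes> h'" "h' \<in> H" using b unfolding spn_def by blast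
    have "a \<otimes> b = (x [^] i \<otimes> x [^] i') \<otimes> (y [^] j \<otimes> y [^] j') \<otimes> (h \<otimes> h')"
      using x y hA[OF a'(2)] hA[OF b'(2)] unfolding a'(1) b'(1)
      by (simp add: m_assoc A_lcomm)
    also have "\<dots> = x [^] (i + i') \<otimes> y [^] (j + j') \<otimes> (h \<otimes> h')"
      using x y by (simp add: nat_pow_mult)
    finally show ?thesis using a'(2) b'(2) H by (simp add: sp_mem subgroup.m_closed)
  qed
  have pw: "a [^] (k::nat) \<in> sp x y H" if a: "a \<in> sp x y H" for a k
  proof (induct k)
    case 0
    have "\<one> = x [^] (0::nat) \<otimes> y [^] (0::nat) \<otimes> \<one>" by simp
    then show ?case using H by (metis nat_pow_0 sp_mem subgroup.one_closed)
  next
    case (Suc k) then show ?case using mult a by simp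
  qed
  show ?thesis
  proof (rule subgroupI)
    show "sp x y H \<subseteq> carrier G" using sp_sub[OF x y H(2)] by auto
    show "sp x y H \<noteq> {}" using sp_mem[of \<one> H x 0 y 0] H by (auto simp: subgroup.one_closed)
    fix a assume a: "a \<in> sp x y H"
    then have "a \<in> A" using sp_sub[OF x y H(2)] by auto
    then show "inv a \<in> sp x y H" using inv_pow pw[OF a] by simp
  next
    fix a b assume "a \<in> sp x y H" "b \<in> sp x y H" then show "a \<otimes> b \<in> sp x y H" by (rule mult)
  qed
qed

lemma sp_H: "subgroup H G \<Longrightarrow> H \<subseteq> A \<Longrightarrow> x \<in> A \<Longrightarrow> y \<in> A \<Longrightarrow> H \<subseteq> sp x y H"
proof
  fix h assume "h \<in> H" "subgroup H G" "H \<subseteq> A" "x \<in> A" "y \<in> A"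
  then show "h \<in> sp x y H" using sp_mem[of h H x 0 y 0] by auto
qed

lemma sp_x: "subgroup H G \<Longrightarrow> x \<in> A \<Longrightarrow> y \<in> A \<Longrightarrow> x \<in> sp x y H"
  using sp_mem[of \<one> H x 1 y 0] by (simp add: subgroup.one_closed)

lemma sp_y: "subgroup H G \<Longrightarrow> x \<in> A \<Longrightarrow> y \<in> A \<Longrightarrow> y \<in> sp x y H"
  using sp_mem[of \<one> H x 0 y 1] by (simp add: subgroup.one_closed)

lemma sp_card2: assumes x: "x \<in> A" and y: "y \<in> A" and H: "finite H"
  shows "card (sp x y H) \<le> p * p * card H"
proof -
  have "sp x y H \<subseteq> (\<lambda>(i, j, h). x [^] i \<otimes> y [^] j \<otimes> h) ` ({..<p} \<times> {..<p} \<times> H)"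
  proof
    fix a assume "a \<in> sp x y H"
    then obtain i j h where a: "a = x [^] (i::nat) \<otimes> y [^] (j::nat) \<otimes> h" "h \<in> H" unfolding spn_def by blast
    have "a = (\<lambda>(i, j, h). x [^] i \<otimes> y [^] j \<otimes> h) (i mod p, j mod p, h)"
      using a pow_mod[OF x, of i] pow_mod[OF y, of j] by simp
    moreover have "(i mod p, j mod p, h) \<in> {..<p} \<times> {..<p} \<times> H" using a p_gt by auto
    ultimately show "a \<in> (\<lambda>(i, j, h). x [^] i \<otimes> y [^] j \<otimes> h) ` ({..<p} \<times> {..<p} \<times> H)" by blast
  qed
  moreover have "finite ({..<p} \<times> {..<p} \<times> H)" using H by simp
  ultimately have "card (sp x y H) \<le> card ({..<p} \<times> {..<p} \<times> H)"
    using card_mono[OF finite_imageI] card_image_le order_trans by metis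
  then show ?thesis by (simp add: card_cartesian_product)
qed

lemma sp_card1: assumes x: "x \<in> A" and H: "finite H" and Hc: "H \<subseteq> carrier G"
  shows "card (sp x \<one> H) \<le> p * card H"
proof -
  have "sp x \<one> H \<subseteq> (\<lambda>(i, h). x [^] i \<otimes> h) ` ({..<p} \<times> H)"
  proof
    fix a assume "a \<in> sp x \<one> H"
    then obtain i j h where a: "a = x [^] (i::nat) \<otimes> \<one> [^] (j::nat) \<otimes> h" "h \<in> H" unfolding spn_def by blast
    have "a = (\<lambda>(i, h). x [^] i \<otimes> h) (i mod p, h)"
      using a pow_mod[OF x, of i] Hc x by auto
    moreover have "(i mod p, h) \<in> {..<p} \<times> H" using a p_gt by auto
    ultimately show "a \<in> (\<lambda>(i, h). x [^] i \<otimes> h) ` ({..<p} \<times> H)" by blast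
  qed
  moreover have "finite ({..<p} \<times> H)" using H by simp
  ultimately have "card (sp x \<one> H) \<le> card ({..<p} \<times> H)"
    using card_mono[OF finite_imageI] card_image_le order_trans by metis
  then show ?thesis by (simp add: card_cartesian_product)
qed

lemma coprime_pow_in: assumes pr: "Factorial_Ring.prime p" and x: "x \<in> A" and H: "subgroup H G"
  and xj: "x [^] (j::nat) \<in> H" and nd: "\<not> p dvd j" shows "x \<in> H"
proof -
  have j0: "j \<noteq> 0" using nd by (metis dvd_0_right)
  have "coprime j p" using pr nd by (metis prime_imp_coprime coprime_commute)
  then have g: "gcd j p = 1" by simp
  obtain u v where uv: "j * u = p * v + gcd j p" using bezout_nat[OF j0] by blast
  have "(j * u) mod p = (1 + p * v) mod p" using uv g by simp
  also have "\<dots> = 1" using p_gt by (metis mod_mult_self2 mod_less mult.commute)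
  finally have "(j * u) mod p = 1" .
  then have "x [^] (j * u) = x" using x pow_mod[of x "j*u"] by simp
  then have "x = (x [^] j) [^] u" using x by (simp add: nat_pow_pow)
  then show ?thesis using xj H pow_in_subgroup by metis
qed

lemma cm_A: "x \<in> A \<Longrightarrow> y \<in> A \<Longrightarrow> cm G x y = \<one>"
  by (simp add: cm_eq_one A_comm)

lemma cm_hom: assumes nA: "\<And>n g. n \<in> A \<Longrightarrow> g \<in> carrier G \<Longrightarrow> g \<otimes> n \<otimes> inv g \<in> A"
  and n1: "n1 \<in> A" and n2: "n2 \<in> A" and g: "g \<in> carrier G"
  shows "cm G (n1 \<otimes> n2) g = cm G n1 g \<otimes> cm G n2 g"
proof -
  define u where "u = g \<otimes> inv n2 \<otimes> inv g"
  define v where "v = g \<otimes> inv n1 \<otimes> inv g"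
  have uA: "u \<in> A" unfolding u_def using nA n2 g A_sub by (simp add: subgroup.m_inv_closed)
  have vA: "v \<in> A" unfolding v_def using nA n1 g A_sub by (simp add: subgroup.m_inv_closed)
  have 1: "cm G (n1 \<otimes> n2) g = n1 \<otimes> n2 \<otimes> u \<otimes> v"
    unfolding u_def v_def cm_def using n1 n2 g by (simp add: m_assoc inv_mult_group)
  have 2: "cm G n1 g = n1 \<otimes> v" unfolding v_def cm_def using n1 g by (simp add: m_assoc)
  have 3: "cm G n2 g = n2 \<otimes> u" unfolding u_def cm_def using n2 g by (simp add: m_assoc)
  show ?thesis unfolding 1 2 3 using n1 n2 uA vA by (simp add: m_assoc A_comm A_lcomm)
qed

lemma cm_pow: assumes nA: "\<And>n g. n \<in> A \<Longrightarrow> g \<in> carrier G \<Longrightarrow> g \<otimes> n \<otimes> inv g \<in> A"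
  and n: "n \<in> A" and g: "g \<in> carrier G"
  shows "cm G (n [^] (k::nat)) g = (cm G n g) [^] k"
proof (induct k)
  case 0 then show ?case using g by simp
next
  case (Suc k)
  then show ?case using cm_hom[OF nA, of "n [^] k" n g] n g by simp
qed

lemma cm_swap: assumes nA: "\<And>n g. n \<in> A \<Longrightarrow> g \<in> carrier G \<Longrightarrow> g \<otimes> n \<otimes> inv g \<in> A"
  and a: "a \<in> carrier G" and b: "b \<in> carrier G" and abA: "cm G a b \<in> A" and n: "n \<in> A"
  shows "cm G (cm G n a) b = cm G (cm G n b) a"
proof -
  have key: "cm G (cm G n g) h = n \<otimes> (g \<otimes> inv n \<otimes> inv g) \<otimes> ((h \<otimes> g) \<otimes> n \<otimes> inv (h \<otimes> g) \<otimes> (h \<otimes> inv n \<otimes> inv h))"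
    if g: "g \<in> carrier G" and h: "h \<in> carrier G" for g h
    using g h n by (simp add: cm_def m_assoc inv_mult_group)
  have Y: "(b \<otimes> a) \<otimes> n \<otimes> inv (b \<otimes> a) = (a \<otimes> b) \<otimes> n \<otimes> inv (a \<otimes> b)"
  proof -
    define e where "e = cm G a b"
    define y where "y = (b \<otimes> a) \<otimes> n \<otimes> inv (b \<otimes> a)"
    have yA: "y \<in> A" unfolding y_def using nA n a b by simp
    have eA: "e \<in> A" using abA e_def by simp
    have ab: "a \<otimes> b = e \<otimes> (b \<otimes> a)" unfolding e_def cm_def using a b by (simp add: m_assoc)
    have "(a \<otimes> b) \<otimes> n \<otimes> inv (a \<otimes> b) = e \<otimes> y \<otimes> inv e"
      unfolding ab y_def using a b n eA by (simp add: m_assoc inv_mult_group)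
    also have "\<dots> = y" using A_comm[OF eA yA] yA eA by (simp add: m_assoc)
    finally show ?thesis unfolding y_def by simp
  qed
  have A1: "g \<otimes> inv n \<otimes> inv g \<in> A" if "g \<in> carrier G" for g
    using nA[of "inv n" g] that n A_sub by (simp add: subgroup.m_inv_closed)
  have A2: "g \<otimes> n \<otimes> inv g \<in> A" if "g \<in> carrier G" for g using nA that n by simp
  have perm: "w \<otimes> x \<otimes> (y \<otimes> z) = w \<otimes> z \<otimes> (y \<otimes> x)" if "w \<in> A" "x \<in> A" "y \<in> A" "z \<in> A" for w x y z
    using that by (simp add: m_assoc A_comm A_lcomm)
  show ?thesis unfolding key[OF a b] key[OF b a] Y
    by (rule perm[OF n A1[OF a] A2[OF m_closed[OF a b]] A1[OF b]])
qed

lemma elab_sub: assumes B: "subgroup B G" "B \<subseteq> A" shows "elab G B p"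
proof -
  have "x \<otimes> y = y \<otimes> x" if "x \<in> B" "y \<in> B" for x y using A_comm that B by blast
  moreover have "x [^] p = \<one>" if "x \<in> B" for x using A_exp that B by blast
  ultimately show ?thesis using B(1) p_gt by (simp add: elab_def elab_axioms_def is_group)
qed

end

context group begin

lemma card_dvd: assumes "finite (carrier G)" "subgroup H G" "subgroup K G" "H \<subseteq> K"
  shows "card H dvd card K"
proof -
  have gK: "group (G\<lparr>carrier := K\<rparr>)" using assms subgroup_imp_group by blast
  have "subgroup H (G\<lparr>carrier := K\<rparr>)" using subgroup_incl assms by blast
  then have "card (rcosets\<^bsub>G\<lparr>carrier := K\<rparr>\<^esub> H) * card H = order (G\<lparr>carrier := K\<rparr>)"
    using group.lagrange[OF gK] by blast
  then show ?thesis by (metis dvd_triv_right order_def partial_object.select_convs(1) partial_object.surjective partial_object.update_convs(1))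
qed

lemma prod_one_inv: "x \<otimes> y = \<one> \<Longrightarrow> x \<in> carrier G \<Longrightarrow> y \<in> carrier G \<Longrightarrow> y = inv x"
  by (metis inv_equality inv_inv)

lemma sub_eq_card: assumes "finite (carrier G)" "subgroup K G" "H \<subseteq> K" "card H = card K"
  shows "H = K"
  using assms by (meson card_subset_eq finite_subset subgroup.subset)

end

lemma ppow: "Factorial_Ring.prime (p::nat) \<Longrightarrow> d dvd p ^ n \<Longrightarrow> \<exists>i\<le>n. d = p ^ i"
  using divides_primepow_nat by blast

lemma ppow_dvd: "1 < (p::nat) \<Longrightarrow> p ^ a dvd p ^ b \<Longrightarrow> a \<le> b"
  by (metis dvd_imp_le power_increasing_iff zero_less_power less_trans zero_less_one)

lemma ppow_le: "1 < (p::nat) \<Longrightarrow> p ^ a \<le> p ^ b \<Longrightarrow> a \<le> b"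
  by simp

theorem lemma4p1:
  fixes G (structure) and p :: nat
  assumes "group G"
    and "Factorial_Ring.prime p"
    and "order G = p ^ 7"
    and "nilpotency_class G 4"
    and "elementary_abelian G p (lower_central G 2)"
    and "card (lower_central G 2) = p ^ 5"
  shows "group_center G = lower_central G 4 \<and> card (lower_central G 4) = p ^ 2"
proof -
  interpret group G by fact
  have pr: "Factorial_Ring.prime p" by fact
  have p1: "1 < p" using pr prime_gt_1_nat by blast
  have fin: "finite (carrier G)"
    using assms(3) p1 unfolding order_def by (metis card.infinite less_numeral_extra(3) zero_less_power less_trans zero_less_one)
  have cardG: "card (carrier G) = p ^ 7" using assms(3) by (simp add: order_def)
  define N2 where "N2 = lower_central G 2"
  define N3 where "N3 = lower_central G 3"
  define N4 where "N4 = lower_central G 4"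
  define N5 where "N5 = lower_central G 5"
  have e1: "lower_central G (Suc 0) = carrier G" by simp
  have e2: "lower_central G (Suc (Suc 0)) = N2" by (simp add: N2_def numeral_2_eq_2)
  have e3: "lower_central G (Suc (Suc (Suc 0))) = N3" by (simp add: N3_def numeral_3_eq_3)
  have e4: "lower_central G (Suc (Suc (Suc (Suc 0)))) = N4" by (simp add: N4_def eval_nat_numeral)
  have e5: "lower_central G (Suc (Suc (Suc (Suc (Suc 0))))) = N5" by (simp add: N5_def eval_nat_numeral)
  have sN2: "subgroup N2 G" using lc_subgroup N2_def by simp
  have sN3: "subgroup N3 G" using lc_subgroup N3_def by simp
  have sN4: "subgroup N4 G" using lc_subgroup N4_def by simp
  have m32: "N3 \<subseteq> N2" using lc_mono[of "Suc 0"] e2 e3 by simp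
  have m43: "N4 \<subseteq> N3" using lc_mono[of "Suc (Suc 0)"] e3 e4 by simp
  have c12: "cm G h g \<in> N2" if "h \<in> carrier G" "g \<in> carrier G" for h g
    using lc_comm[of h 0 g] that e2 by simp
  have c23: "cm G h g \<in> N3" if "h \<in> N2" "g \<in> carrier G" for h g
    using lc_comm[of h "Suc 0" g] that e2 e3 by simp
  have c34: "cm G h g \<in> N4" if "h \<in> N3" "g \<in> carrier G" for h g
    using lc_comm[of h "Suc (Suc 0)" g] that e3 e4 by simp
  have c45: "cm G h g \<in> N5" if "h \<in> N4" "g \<in> carrier G" for h g
    using lc_comm[of h "Suc (Suc (Suc 0))" g] that e4 e5 by simp
  have g2: "N2 \<subseteq> S" if "subgroup S G" "\<And>h g. h \<in> carrier G \<Longrightarrow> g \<in> carrier G \<Longrightarrow> cm G h g \<in> S" for S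
    using lc_min[of S 0] that e2 by simp
  have g3: "N3 \<subseteq> S" if "subgroup S G" "\<And>h g. h \<in> N2 \<Longrightarrow> g \<in> carrier G \<Longrightarrow> cm G h g \<in> S" for S
    using lc_min[of S "Suc 0"] that e2 e3 by simp
  have g4: "N4 \<subseteq> S" if "subgroup S G" "\<And>h g. h \<in> N3 \<Longrightarrow> g \<in> carrier G \<Longrightarrow> cm G h g \<in> S" for S
    using lc_min[of S "Suc (Suc 0)"] that e3 e4 by simp
  have nN2: "g \<otimes> s \<otimes> inv g \<in> N2" if "s \<in> N2" "g \<in> carrier G" for s g
    using lc_normal[of s "Suc 0" g] that e2 by simp
  have nN3: "g \<otimes> s \<otimes> inv g \<in> N3" if "s \<in> N3" "g \<in> carrier G" for s g
    using lc_normal[of s "Suc (Suc 0)" g] that e3 by simp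
  have N5: "N5 = {\<one>}" using assms(4) unfolding nilpotency_class_def N5_def by (simp add: eval_nat_numeral)
  have N4ne: "N4 \<noteq> {\<one>}" using assms(4) unfolding nilpotency_class_def N4_def by auto
  have cN2: "card N2 = p ^ 5" using assms(6) N2_def by simp
  have EA: "elementary_abelian G p N2" using assms(5) N2_def by simp
  have cgN: "comm_group (G\<lparr>carrier := N2\<rparr>)" using EA unfolding elementary_abelian_def by blast
  have Acomm: "x \<otimes> y = y \<otimes> x" if "x \<in> N2" "y \<in> N2" for x y
    using comm_monoid.m_comm[OF comm_group.axioms(1)[OF cgN], of x y] that by simp
  have Aexp: "x [^] p = \<one>" if "x \<in> N2" for x using EA that unfolding elementary_abelian_def by blast
  have "elab G N2 p" unfolding elab_def elab_axioms_def
    using Acomm Aexp sN2 p1 is_group by blast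
  then interpret E: elab G N2 p .
  interpret E3: elab G N3 p by (rule E.elab_sub[OF sN3 m32])
  interpret E4: elab G N4 p by (rule E.elab_sub[OF sN4]) (use m43 m32 in auto)
  have cdvd: "card H dvd card K" if "subgroup H G" "subgroup K G" "H \<subseteq> K" for H K
    using card_dvd[OF fin that] .
  have cpow: "\<exists>i\<le>n. card H = p ^ i" if "subgroup H G" "subgroup K G" "H \<subseteq> K" "card K = p ^ n" for H K n
    using ppow[OF pr] cdvd[OF that(1-3)] that(4) by metis
  have N3N2: "N3 \<noteq> N2"
  proof
    assume h: "N3 = N2"
    have "N4 = N3" using h unfolding N4_def N3_def N2_def by (simp add: eval_nat_numeral)
    moreover have "N5 = N4" using h \<open>N4 = N3\<close> unfolding N5_def N4_def N3_def by (simp add: eval_nat_numeral)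
    ultimately have "N2 = {\<one>}" using N5 h by simp
    then have "card N2 = 1" by simp
    moreover have "1 < p ^ 5" using p1 one_less_power[of p 5] by simp
    ultimately show False using cN2 by simp
  qed
  have N4N3: "N4 \<noteq> N3"
  proof
    assume h: "N4 = N3"
    have "N5 = N4" using h unfolding N5_def N4_def N3_def by (simp add: eval_nat_numeral)
    then show False using N5 N4ne by simp
  qed
  have N2car: "N2 \<subseteq> carrier G" using sN2 subgroup.subset by blast
  have N3N2': "N2 \<subseteq> N3 \<Longrightarrow> False" using N3N2 m32 by blast
  have notab: False if Xs: "Xs \<subseteq> carrier G" "generate G Xs = carrier G"
    and xy: "\<And>x y. x \<in> Xs \<Longrightarrow> y \<in> Xs \<Longrightarrow> cm G x y \<in> N3" for Xs
  proof -
    have "cm G g h \<in> N3" if "g \<in> carrier G" "h \<in> carrier G" for g h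
      by (rule comm_gen2[OF sN3 nN3 Xs xy that]) auto
    then have "N2 \<subseteq> N3" using g2[OF sN3] by blast
    then show False by (rule N3N2')
  qed
  have cN3gen: "cm G x y \<in> N3" if "x \<in> N2 \<or> y \<in> N2" "x \<in> carrier G" "y \<in> carrier G" for x y
    using that c23 cm_inv[of y x] sN3 by (metis subgroup.m_inv_closed)
  have gen2: "\<exists>b \<in> carrier G. generate G (insert a (insert b N2)) = carrier G"
    if a: "a \<in> carrier G" "a \<notin> N2" for a
  proof -
    define H1 where "H1 = generate G (insert a N2)"
    have sH1: "subgroup H1 G" unfolding H1_def using generate_is_subgroup N2car a by auto
    have N2H1: "N2 \<subseteq> H1" unfolding H1_def by (auto intro: generate.incl)
    have aH1: "a \<in> H1" unfolding H1_def by (auto intro: generate.incl)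
    have H1G: "H1 \<noteq> carrier G"
    proof
      assume h: "H1 = carrier G"
      show False
      proof (rule notab[of "insert a N2"])
        show "insert a N2 \<subseteq> carrier G" using a N2car by auto
        show "generate G (insert a N2) = carrier G" using h H1_def by simp
        fix x y assume "x \<in> insert a N2" "y \<in> insert a N2"
        then show "cm G x y \<in> N3" using cN3gen a N2car sN3 subgroup.one_closed by fastforce
      qed
    qed
    obtain i where i: "i \<le> 7" "card H1 = p ^ i" using cpow[OF sH1 subgroup_self subgroup.subset[OF sH1] cardG] by blast
    have "p ^ 5 dvd p ^ i" using cdvd[OF sN2 sH1 N2H1] cN2 i by simp
    then have "5 \<le> i" using ppow_dvd p1 by blast
    moreover have "i \<noteq> 5" using sub_eq_card[OF fin sH1 N2H1] aH1 a cN2 i by auto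
    moreover have "i \<noteq> 7" using sub_eq_card[OF fin subgroup_self subgroup.subset[OF sH1]] H1G cardG i by auto
    ultimately have i6: "card H1 = p ^ 6" using i by (cases "i = 6") auto
    obtain b where b: "b \<in> carrier G" "b \<notin> H1" using H1G subgroup.subset[OF sH1] by blast
    define H2 where "H2 = generate G (insert a (insert b N2))"
    have sH2: "subgroup H2 G" unfolding H2_def using generate_is_subgroup N2car a b by auto
    have H12: "H1 \<subseteq> H2" unfolding H1_def H2_def by (rule mono_generate) auto
    have bH2: "b \<in> H2" unfolding H2_def by (auto intro: generate.incl)
    obtain j where j: "j \<le> 7" "card H2 = p ^ j" using cpow[OF sH2 subgroup_self subgroup.subset[OF sH2] cardG] by blast
    have "p ^ 6 dvd p ^ j" using cdvd[OF sH1 sH2 H12] i6 j by simp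
    then have "6 \<le> j" using ppow_dvd p1 by blast
    moreover have "j \<noteq> 6" using sub_eq_card[OF fin sH2 H12] bH2 b i6 j by auto
    ultimately have "card H2 = card (carrier G)" using j cardG by (cases "j = 7") auto
    then have "H2 = carrier G" using sub_eq_card[OF fin subgroup_self subgroup.subset[OF sH2]] by simp
    then show ?thesis using b H2_def by blast
  qed
  have p57: "p ^ 5 \<noteq> p ^ 7" using p1 by simp
  obtain a where a: "a \<in> carrier G" "a \<notin> N2"
  proof -
    have "\<not> carrier G \<subseteq> N2" using N2car cN2 cardG p57 by (metis subset_antisym)
    then show ?thesis using that by blast
  qed
  obtain b where b: "b \<in> carrier G" and genab: "generate G (insert a (insert b N2)) = carrier G"
    using gen2[OF a] by blast
  define Xs where "Xs = insert a (insert b N2)"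
  have Xs: "Xs \<subseteq> carrier G" "generate G Xs = carrier G" using a b N2car genab Xs_def by auto
  define c where "c = cm G a b"
  have cin: "c \<in> N2" using c12 a b c_def by simp
  have sN4N2: "N4 \<subseteq> N2" using m43 m32 by blast
  have N3c: "N3 \<subseteq> carrier G" using m32 N2car by blast
  have N4c: "N4 \<subseteq> carrier G" using sN4N2 N2car by blast
  define S2 where "S2 = spn G c \<one> N3"
  have sS2: "subgroup S2 G" unfolding S2_def by (rule E.sp_subgroup[OF cin E.A_one sN3 m32])
  have S2N2: "S2 \<subseteq> N2" unfolding S2_def by (rule E.sp_sub[OF cin E.A_one m32])
  have N3S2: "N3 \<subseteq> S2" unfolding S2_def by (rule E.sp_H[OF sN3 m32 cin E.A_one])
  have cS2: "c \<in> S2" unfolding S2_def by (rule E.sp_x[OF sN3 cin E.A_one])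
  have nS2: "g \<otimes> s \<otimes> inv g \<in> S2" if "s \<in> S2" "g \<in> carrier G" for s g
    by (rule normal_of_comm[OF sS2 _ that]) (use c23 S2N2 N3S2 in blast)
  have N2S2: "N2 \<subseteq> S2"
  proof (rule g2[OF sS2])
    fix h g assume hg: "h \<in> carrier G" "g \<in> carrier G"
    show "cm G h g \<in> S2"
    proof (rule comm_gen2[OF sS2 nS2 Xs _ hg])
      fix x y assume xy: "x \<in> Xs" "y \<in> Xs"
      show "cm G x y \<in> S2"
      proof (cases "x \<in> N2 \<or> y \<in> N2")
        case True then show ?thesis using cN3gen xy Xs N3S2 by blast
      next
        case False
        then have "x \<in> {a, b}" "y \<in> {a, b}" using xy Xs_def by auto
        moreover have "cm G b a \<in> S2" using cS2 c_def cm_inv[OF a(1) b] sS2 subgroup.m_inv_closed by metis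
        moreover have "\<one> \<in> S2" using sS2 subgroup.one_closed by blast
        ultimately show ?thesis using cS2 c_def a b by auto
      qed
    qed
  qed
  have finN3: "finite N3" using fin N3c finite_subset by blast
  have finN4: "finite N4" using fin N4c finite_subset by blast
  have "p ^ 5 \<le> p * card N3"
    using E.sp_card1[OF cin finN3 N3c] card_mono[OF _ N2S2] cN2 S2_def fin S2N2 finite_subset N2car
    by (metis order_trans)
  moreover obtain i3 where i3: "i3 \<le> 5" "card N3 = p ^ i3" using cpow[OF sN3 sN2 m32 cN2] by blast
  ultimately have "p ^ 5 \<le> p ^ Suc i3" by simp
  then have "5 \<le> Suc i3" by (rule ppow_le[OF p1])
  moreover have "i3 \<noteq> 5" using sub_eq_card[OF fin sN2 m32] N3N2 i3 cN2 by auto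
  ultimately have cN3: "card N3 = p ^ 4" using i3 by (cases "i3 = 4") auto
  have hom: "cm G (n1 \<otimes> n2) g = cm G n1 g \<otimes> cm G n2 g" if "n1 \<in> N2" "n2 \<in> N2" "g \<in> carrier G" for n1 n2 g
    by (rule E.cm_hom[OF nN2 that])
  have hpow: "cm G (n [^] (k::nat)) g = (cm G n g) [^] k" if "n \<in> N2" "g \<in> carrier G" for n k g
    by (rule E.cm_pow[OF nN2 that])
  have decomp2: "\<exists>k m. m \<in> N3 \<and> h = c [^] (k::nat) \<otimes> m" if "h \<in> N2" for h
  proof -
    from that N2S2 obtain k j m where "h = c [^] (k::nat) \<otimes> \<one> [^] (j::nat) \<otimes> m" "m \<in> N3"
      unfolding S2_def spn_def by blast
    then show ?thesis using cin N3c by auto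
  qed
  have cmA: "cm G x y = \<one>" if "x \<in> N2" "y \<in> N2" for x y by (rule E.cm_A[OF that])
  define u0 where "u0 = cm G c a"
  define v0 where "v0 = cm G c b"
  have u0N3: "u0 \<in> N3" unfolding u0_def using c23 cin a by simp
  have v0N3: "v0 \<in> N3" unfolding v0_def using c23 cin b by simp
  have u0N2: "u0 \<in> N2" using u0N3 m32 by blast
  have v0N2: "v0 \<in> N2" using v0N3 m32 by blast
  define S3 where "S3 = spn G u0 v0 N4"
  have sS3: "subgroup S3 G" unfolding S3_def by (rule E3.sp_subgroup[OF u0N3 v0N3 sN4 m43])
  have S3N3: "S3 \<subseteq> N3" unfolding S3_def by (rule E3.sp_sub[OF u0N3 v0N3 m43])
  have N4S3: "N4 \<subseteq> S3" unfolding S3_def by (rule E3.sp_H[OF sN4 m43 u0N3 v0N3])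
  have nS3: "g \<otimes> s \<otimes> inv g \<in> S3" if "s \<in> S3" "g \<in> carrier G" for s g
    by (rule normal_of_comm[OF sS3 _ that]) (use c34 S3N3 N4S3 in blast)
  have cm2: "cm G h x = (cm G c x) [^] k \<otimes> cm G m x" if "m \<in> N3" "h = c [^] (k::nat) \<otimes> m" "x \<in> carrier G" for h x k m
    using hom[of "c [^] k" m x] hpow[OF cin, of x k] that cin m32 by auto
  have N3S3: "N3 \<subseteq> S3"
  proof (rule g3[OF sS3])
    fix h g assume h: "h \<in> N2" and g: "g \<in> carrier G"
    show "cm G h g \<in> S3"
    proof (rule comm_gen[OF sS3 nS3 Xs _ _ g])
      show "h \<in> carrier G" using h N2car by blast
      fix x assume x: "x \<in> Xs"
      obtain k m where km: "m \<in> N3" "h = c [^] (k::nat) \<otimes> m" using decomp2[OF h] by blast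
      have mc: "m \<in> carrier G" using km N3c by blast
      consider "x = a" | "x = b" | "x \<in> N2" using x Xs_def by blast
      then show "cm G h x \<in> S3"
      proof cases
        case 1
        have eq: "cm G h x = u0 [^] k \<otimes> v0 [^] (0::nat) \<otimes> cm G m a"
          using cm2[OF km a(1)] 1 u0_def u0N2 by simp
        have "u0 [^] k \<otimes> v0 [^] (0::nat) \<otimes> cm G m a \<in> S3" unfolding S3_def
          by (rule E3.sp_mem) (rule c34[OF km(1) a(1)])
        then show ?thesis unfolding eq .
      next
        case 2
        have eq: "cm G h x = u0 [^] (0::nat) \<otimes> v0 [^] k \<otimes> cm G m b"
          using cm2[OF km b] 2 v0_def v0N2 by simp
        have "u0 [^] (0::nat) \<otimes> v0 [^] k \<otimes> cm G m b \<in> S3" unfolding S3_def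
          by (rule E3.sp_mem) (rule c34[OF km(1) b])
        then show ?thesis unfolding eq .
      next
        case 3
        then show ?thesis using cmA[OF h 3] sS3 subgroup.one_closed by simp
      qed
    qed
  qed
  have "p ^ 4 \<le> p * p * card N4"
    using E3.sp_card2[OF u0N3 v0N3 finN4] card_mono[OF _ N3S3] cN3 S3_def S3N3 finN3 finite_subset
    by (metis order_trans)
  moreover obtain i4 where i4: "i4 \<le> 4" "card N4 = p ^ i4" using cpow[OF sN4 sN3 m43 cN3] by blast
  ultimately have "p ^ 4 \<le> p ^ Suc (Suc i4)" by (simp add: mult.assoc)
  then have i4ge: "4 \<le> Suc (Suc i4)" by (rule ppow_le[OF p1])
  have i4ne: "i4 \<noteq> 4" using sub_eq_card[OF fin sN3 m43] N4N3 i4 cN3 by auto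
  have cmg: "cm G (e [^] (k::nat) \<otimes> m) x = (cm G e x) [^] k \<otimes> cm G m x" if "e \<in> N2" "m \<in> N2" "x \<in> carrier G" for e m x k
    using hom[OF E.A_pow[OF that(1)] that(2,3), of k] hpow[OF that(1,3), of k] by simp
  have oneN4: "{\<one>} \<subseteq> N4" using sN4 subgroup.one_closed by blast
  have i4ne3: "i4 \<noteq> 3"
  proof
    assume i43: "i4 = 3"
    obtain d where d: "d \<in> N3" "d \<notin> N4" using N4N3 m43 by blast
    have dN2: "d \<in> N2" using d m32 by blast
    define K where "K = spn G d \<one> N4"
    have sK: "subgroup K G" unfolding K_def by (rule E3.sp_subgroup[OF d(1) E3.A_one sN4 m43])
    have KN3: "K \<subseteq> N3" unfolding K_def by (rule E3.sp_sub[OF d(1) E3.A_one m43])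
    have N4K: "N4 \<subseteq> K" unfolding K_def by (rule E3.sp_H[OF sN4 m43 d(1) E3.A_one])
    have dK: "d \<in> K" unfolding K_def by (rule E3.sp_x[OF sN4 d(1) E3.A_one])
    obtain j where j: "j \<le> 4" "card K = p ^ j" using cpow[OF sK sN3 KN3 cN3] by blast
    have "p ^ 3 dvd p ^ j" using cdvd[OF sN4 sK N4K] i4 i43 j by simp
    then have "3 \<le> j" using ppow_dvd p1 by blast
    moreover have "j \<noteq> 3"
    proof
      assume "j = 3"
      then have "card N4 = card K" using i4 i43 j by simp
      then have "N4 = K" by (rule sub_eq_card[OF fin sK N4K])
      then show False using d dK by simp
    qed
    ultimately have "j = 4" using j(1) by arith
    then have "card K = card N3" using j cN3 by simp
    then have KN3eq: "K = N3" using sub_eq_card[OF fin sN3 KN3] by simp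
    define S4 where "S4 = spn G (cm G d a) (cm G d b) {\<one>}"
    have daN4: "cm G d a \<in> N4" using c34 d a by simp
    have dbN4: "cm G d b \<in> N4" using c34 d b by simp
    have sS4: "subgroup S4 G" unfolding S4_def by (rule E4.sp_subgroup[OF daN4 dbN4 triv_subgroup oneN4])
    have S4N4: "S4 \<subseteq> N4" unfolding S4_def by (rule E4.sp_sub[OF daN4 dbN4 oneN4])
    have oneS4: "\<one> \<in> S4" using sS4 subgroup.one_closed by blast
    have nS4: "g \<otimes> s \<otimes> inv g \<in> S4" if "s \<in> S4" "g \<in> carrier G" for s g
    proof (rule normal_of_comm[OF sS4 _ that])
      fix s' g' assume "s' \<in> S4" "g' \<in> carrier G"
      then have "cm G s' g' \<in> N5" using c45 S4N4 by blast
      then show "cm G s' g' \<in> S4" using N5 oneS4 by simp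
    qed
    have N4S4: "N4 \<subseteq> S4"
    proof (rule g4[OF sS4])
      fix h g assume h: "h \<in> N3" and g: "g \<in> carrier G"
      show "cm G h g \<in> S4"
      proof (rule comm_gen[OF sS4 nS4 Xs _ _ g])
        show "h \<in> carrier G" using h N3c by blast
        fix x assume x: "x \<in> Xs"
        from h KN3eq obtain k jj m where km: "h = d [^] (k::nat) \<otimes> \<one> [^] (jj::nat) \<otimes> m" "m \<in> N4"
          unfolding K_def spn_def by blast
        have km': "h = d [^] k \<otimes> m" using km d N4c by auto
        have mN2: "m \<in> N2" using km sN4N2 by blast
        consider "x = a" | "x = b" | "x \<in> N2" using x Xs_def by blast
        then show "cm G h x \<in> S4"
        proof cases
          case 1
          have "cm G m a = \<one>" using c45[OF km(2) a(1)] N5 by simp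
          then have eq: "cm G h x = (cm G d a) [^] k \<otimes> (cm G d b) [^] (0::nat) \<otimes> \<one>"
            using cmg[OF dN2 mN2 a(1), of k] km' 1 daN4 N4c by auto
          have "(cm G d a) [^] k \<otimes> (cm G d b) [^] (0::nat) \<otimes> \<one> \<in> S4" unfolding S4_def
            by (rule E4.sp_mem) simp
          then show ?thesis unfolding eq .
        next
          case 2
          have "cm G m b = \<one>" using c45[OF km(2) b] N5 by simp
          then have eq: "cm G h x = (cm G d a) [^] (0::nat) \<otimes> (cm G d b) [^] k \<otimes> \<one>"
            using cmg[OF dN2 mN2 b, of k] km' 2 dbN4 N4c by auto
          have "(cm G d a) [^] (0::nat) \<otimes> (cm G d b) [^] k \<otimes> \<one> \<in> S4" unfolding S4_def
            by (rule E4.sp_mem) simp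
          then show ?thesis unfolding eq .
        next
          case 3
          have "h \<in> N2" using h m32 by blast
          then show ?thesis using cmA[OF _ 3] oneS4 by simp
        qed
      qed
    qed
    have "card S4 \<le> p * p * 1"
      using E4.sp_card2[OF daN4 dbN4, of "{\<one>}"] S4_def by simp
    then have "card N4 \<le> p * p" using card_mono[OF _ N4S4] finN4 S4N4 finite_subset by (metis order_trans mult_1_right)
    then have "p ^ 3 \<le> p ^ 2" using i4 i43 by (simp add: power2_eq_square)
    then show False using p1 by simp
  qed
  have "i4 = 2" using i4(1) i4ge i4ne i4ne3 by arith
  then have cN4: "card N4 = p ^ 2" using i4(2) by simp
  have N4cent: "N4 \<subseteq> group_center G"
  proof
    fix m assume m: "m \<in> N4"
    have "m \<otimes> g = g \<otimes> m" if "g \<in> carrier G" for g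
    proof -
      have "cm G m g \<in> N5" using c45 m that by blast
      then have "cm G m g = \<one>" using N5 by simp
      then show ?thesis using cm_eq_one m N4c that by blast
    qed
    then show "m \<in> group_center G" unfolding group_center_def using m N4c by blast
  qed
  define U where "U = cm G u0 a"
  define V where "V = cm G u0 b"
  define W where "W = cm G v0 b"
  have UN4: "U \<in> N4" unfolding U_def using c34 u0N3 a by blast
  have VN4: "V \<in> N4" unfolding V_def using c34 u0N3 b by blast
  have WN4: "W \<in> N4" unfolding W_def using c34 v0N3 b by blast
  have UN2: "U \<in> N2" using UN4 sN4N2 by blast
  have VN2: "V \<in> N2" using VN4 sN4N2 by blast
  have WN2: "W \<in> N2" using WN4 sN4N2 by blast
  have Uc: "U \<in> carrier G" using UN2 N2car by blast
  have Vc: "V \<in> carrier G" using VN2 N2car by blast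
  have Wc: "W \<in> carrier G" using WN2 N2car by blast
  have VV: "cm G v0 a = V" unfolding V_def u0_def v0_def
    using E.cm_swap[OF nN2 a(1) b _ cin] c12[OF a(1) b] c_def by simp
  have N3dec: "\<exists>i j h. h \<in> N4 \<and> n = u0 [^] (i::nat) \<otimes> v0 [^] (j::nat) \<otimes> h" if "n \<in> N3" for n
    using that N3S3 unfolding S3_def spn_def by blast
  have N3a: "cm G (u0 [^] (i::nat) \<otimes> v0 [^] (j::nat) \<otimes> h) a = U [^] i \<otimes> V [^] j" if "h \<in> N4" for i j h
  proof -
    have hN2: "h \<in> N2" using that sN4N2 by blast
    have "cm G h a = \<one>" using c45[OF that a(1)] N5 by simp
    moreover have "cm G (u0 [^] i \<otimes> v0 [^] j \<otimes> h) a = cm G (u0 [^] i) a \<otimes> cm G (v0 [^] j) a \<otimes> cm G h a"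
      using hom[OF E.A_m[OF E.A_pow[OF u0N2] E.A_pow[OF v0N2]] hN2 a(1)]
        hom[OF E.A_pow[OF u0N2] E.A_pow[OF v0N2] a(1)] by simp
    ultimately show ?thesis using hpow[OF u0N2 a(1)] hpow[OF v0N2 a(1)] VV U_def u0N2 v0N2 a Uc Vc by simp
  qed
  have N3b: "cm G (u0 [^] (i::nat) \<otimes> v0 [^] (j::nat) \<otimes> h) b = V [^] i \<otimes> W [^] j" if "h \<in> N4" for i j h
  proof -
    have hN2: "h \<in> N2" using that sN4N2 by blast
    have "cm G h b = \<one>" using c45[OF that b] N5 by simp
    moreover have "cm G (u0 [^] i \<otimes> v0 [^] j \<otimes> h) b = cm G (u0 [^] i) b \<otimes> cm G (v0 [^] j) b \<otimes> cm G h b"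
      using hom[OF E.A_m[OF E.A_pow[OF u0N2] E.A_pow[OF v0N2]] hN2 b]
        hom[OF E.A_pow[OF u0N2] E.A_pow[OF v0N2] b] by simp
    ultimately show ?thesis using hpow[OF u0N2 b] hpow[OF v0N2 b] V_def W_def u0N2 v0N2 b Vc Wc by simp
  qed
  define TW where "TW = spn G W \<one> {\<one>}"
  have sTW: "subgroup TW G" unfolding TW_def by (rule E4.sp_subgroup[OF WN4 E4.A_one triv_subgroup oneN4])
  have TWN4: "TW \<subseteq> N4" unfolding TW_def by (rule E4.sp_sub[OF WN4 E4.A_one oneN4])
  define T where "T = spn G U V TW"
  have sT: "subgroup T G" unfolding T_def by (rule E4.sp_subgroup[OF UN4 VN4 sTW TWN4])
  have TN4: "T \<subseteq> N4" unfolding T_def by (rule E4.sp_sub[OF UN4 VN4 TWN4])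
  have oneT: "\<one> \<in> T" using sT subgroup.one_closed by blast
  have oneTW: "\<one> \<in> TW" using sTW subgroup.one_closed by blast
  have nT: "g \<otimes> s \<otimes> inv g \<in> T" if "s \<in> T" "g \<in> carrier G" for s g
  proof (rule normal_of_comm[OF sT _ that])
    fix s' g' assume "s' \<in> T" "g' \<in> carrier G"
    then have "cm G s' g' \<in> N5" using c45 TN4 by blast
    then show "cm G s' g' \<in> T" using N5 oneT by simp
  qed
  have N4T: "N4 \<subseteq> T"
  proof (rule g4[OF sT])
    fix h g assume h: "h \<in> N3" and g: "g \<in> carrier G"
    show "cm G h g \<in> T"
    proof (rule comm_gen[OF sT nT Xs _ _ g])
      show "h \<in> carrier G" using h N3c by blast
      fix x assume x: "x \<in> Xs"
      obtain i j h' where ijh: "h' \<in> N4" "h = u0 [^] (i::nat) \<otimes> v0 [^] (j::nat) \<otimes> h'" using N3dec[OF h] by blast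
      consider "x = a" | "x = b" | "x \<in> N2" using x Xs_def by blast
      then show "cm G h x \<in> T"
      proof cases
        case 1
        have eq: "cm G h x = U [^] i \<otimes> V [^] j \<otimes> \<one>" using N3a[OF ijh(1)] ijh 1 Uc Vc by simp
        have "U [^] i \<otimes> V [^] j \<otimes> \<one> \<in> T" unfolding T_def by (rule E4.sp_mem[OF oneTW])
        then show ?thesis unfolding eq .
      next
        case 2
        have eq: "cm G h x = U [^] (0::nat) \<otimes> V [^] i \<otimes> (W [^] j \<otimes> \<one> [^] (0::nat) \<otimes> \<one>)"
          using N3b[OF ijh(1)] ijh 2 Uc Vc Wc by simp
        have "W [^] j \<otimes> \<one> [^] (0::nat) \<otimes> \<one> \<in> TW" unfolding TW_def by (rule E4.sp_mem) simp
        then have "U [^] (0::nat) \<otimes> V [^] i \<otimes> (W [^] j \<otimes> \<one> [^] (0::nat) \<otimes> \<one>) \<in> T" unfolding T_def by (rule E4.sp_mem)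
        then show ?thesis unfolding eq .
      next
        case 3
        have "h \<in> N2" using h m32 by blast
        then show ?thesis using cmA[OF _ 3] oneT by simp
      qed
    qed
  qed
  have cardsmall: "card N4 \<le> p" if "N4 \<subseteq> spn G x \<one> {\<one>}" "x \<in> N4" for x
  proof -
    have "card (spn G x \<one> {\<one>}) \<le> p * 1" using E4.sp_card1[OF that(2), of "{\<one>}"] by simp
    moreover have "finite (spn G x \<one> {\<one>})" using E4.sp_sub[OF that(2) E4.A_one oneN4] finN4 finite_subset by blast
    ultimately show ?thesis using card_mono that(1) by (metis order_trans mult_1_right)
  qed
  have p2p: "\<not> p ^ 2 \<le> p" using p1 by (simp add: power2_eq_square)
  have centN4: "group_center G \<subseteq> N4"
  proof
    fix z assume z: "z \<in> group_center G"
    have zc: "z \<in> carrier G" using z unfolding group_center_def by blast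
    have zcm: "cm G z g = \<one>" if "g \<in> carrier G" for g
      using z that cm_eq_one zc unfolding group_center_def by blast
    have zcm': "cm G g z = \<one>" if "g \<in> carrier G" for g
      using zcm[OF that] cm_inv[OF zc that] by (metis inv_one)
    show "z \<in> N4"
    proof (cases "z \<in> N2")
      case False
      obtain w where w: "w \<in> carrier G" and genzw: "generate G (insert z (insert w N2)) = carrier G"
        using gen2[OF zc False] by blast
      show ?thesis
      proof (rule notab[of "insert z (insert w N2)", THEN FalseE])
        show "insert z (insert w N2) \<subseteq> carrier G" using zc w N2car by auto
        show "generate G (insert z (insert w N2)) = carrier G" by (rule genzw)
        fix x y assume xy: "x \<in> insert z (insert w N2)" "y \<in> insert z (insert w N2)"
        have one3: "\<one> \<in> N3" using sN3 subgroup.one_closed by blast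
        show "cm G x y \<in> N3"
        proof (cases "x \<in> N2 \<or> y \<in> N2")
          case True then show ?thesis using cN3gen xy zc w N2car by blast
        next
          case False
          then have "x \<in> {z, w}" "y \<in> {z, w}" using xy by auto
          then show ?thesis using zcm zcm' zc w one3 by auto
        qed
      qed
    next
      case True
      obtain k m where km: "m \<in> N3" "z = c [^] (k::nat) \<otimes> m" using decomp2[OF True] by blast
      have mN2: "m \<in> N2" using km m32 by blast
      have "cm G z a = u0 [^] k \<otimes> cm G m a" using cmg[OF cin mN2 a(1), of k] km u0_def by simp
      then have "u0 [^] k \<otimes> cm G m a = \<one>" using zcm a by simp
      then have "cm G m a = inv (u0 [^] k)" using prod_one_inv u0N2 mN2 N2car a by auto
      then have "inv (u0 [^] k) \<in> N4" using c34[OF km(1) a(1)] by simp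
      then have u0k: "u0 [^] k \<in> N4" using sN4 subgroup.m_inv_closed u0N2 N2car by fastforce
      have pk: "p dvd k"
      proof (rule ccontr)
        assume nd: "\<not> p dvd k"
        have u0N4: "u0 \<in> N4" by (rule E.coprime_pow_in[OF pr u0N2 sN4 u0k nd])
        have "N3 \<subseteq> spn G v0 \<one> N4"
        proof
          fix n assume "n \<in> N3"
          then obtain i j h where ijh: "h \<in> N4" "n = u0 [^] (i::nat) \<otimes> v0 [^] (j::nat) \<otimes> h" using N3dec by blast
          have hN2: "h \<in> N2" using ijh sN4N2 by blast
          have "n = v0 [^] j \<otimes> \<one> [^] (0::nat) \<otimes> (u0 [^] i \<otimes> h)"
            using ijh E.A_comm[OF E.A_pow[OF u0N2] E.A_pow[OF v0N2], of i j] u0N2 v0N2 hN2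
            by (simp add: m_assoc)
          moreover have "u0 [^] i \<otimes> h \<in> N4" using u0N4 ijh sN4 pow_in_subgroup subgroup.m_closed by metis
          ultimately show "n \<in> spn G v0 \<one> N4" using E.sp_mem by metis
        qed
        then have "card N3 \<le> p * card N4"
          using E.sp_card1[OF v0N2 finN4 N4c] card_mono E.sp_sub[OF v0N2 E.A_one sN4N2] fin N2car finite_subset
          by (metis order_trans)
        then have "p ^ 4 \<le> p ^ 3" using cN3 cN4 by (simp add: eval_nat_numeral)
        then show False using p1 by simp
      qed
      have "c [^] k = \<one>" using E.pow_mod[OF cin, of k] pk by simp
      then have zm: "z = m" using km N3c by simp
      obtain i j h where ijh: "h \<in> N4" "z = u0 [^] (i::nat) \<otimes> v0 [^] (j::nat) \<otimes> h"
        using N3dec[OF km(1)] zm by blast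
      have ea: "U [^] i \<otimes> V [^] j = \<one>" using N3a[OF ijh(1), of i j] ijh(2) zcm a by simp
      have eb: "V [^] i \<otimes> W [^] j = \<one>" using N3b[OF ijh(1), of i j] ijh(2) zcm b by simp
      define TU where "TU = spn G U \<one> {\<one>}"
      have sTU: "subgroup TU G" unfolding TU_def by (rule E4.sp_subgroup[OF UN4 E4.A_one triv_subgroup oneN4])
      have UTU: "U \<in> TU" unfolding TU_def by (rule E4.sp_x[OF triv_subgroup UN4 E4.A_one])
      show "z \<in> N4"
      proof (cases "p dvd j")
        case False
        have "V [^] j = inv (U [^] i)" using prod_one_inv[OF ea] Uc Vc by simp
        then have "V [^] j \<in> TU" using sTU UTU pow_in_subgroup subgroup.m_inv_closed by metis
        then have VTU: "V \<in> TU" by (rule E.coprime_pow_in[OF pr VN2 sTU _ False])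
        have "W [^] j = inv (V [^] i)" using prod_one_inv[OF eb] Vc Wc by simp
        then have "W [^] j \<in> TU" using sTU VTU pow_in_subgroup subgroup.m_inv_closed by metis
        then have WTU: "W \<in> TU" by (rule E.coprime_pow_in[OF pr WN2 sTU _ False])
        have "TW \<subseteq> TU"
        proof
          fix t assume "t \<in> TW"
          then obtain l l' where "t = W [^] (l::nat) \<otimes> \<one> [^] (l'::nat) \<otimes> \<one>" unfolding TW_def spn_def by blast
          then show "t \<in> TU" using WTU sTU pow_in_subgroup Wc by simp
        qed
        have "T \<subseteq> TU"
        proof
          fix t assume "t \<in> T"
          then obtain l l' t' where "t = U [^] (l::nat) \<otimes> V [^] (l'::nat) \<otimes> t'" "t' \<in> TW" unfolding T_def spn_def by blast
          then show "t \<in> TU" using UTU VTU \<open>TW \<subseteq> TU\<close> sTU pow_in_subgroup subgroup.m_closed by (metis subsetD)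
        qed
        then have "card N4 \<le> p" using cardsmall[OF _ UN4] N4T TU_def by blast
        then show ?thesis using cN4 p2p by simp
      next
        case True
        have Vj: "V [^] j = \<one>" using E.pow_mod[OF VN2, of j] True by simp
        have Wj: "W [^] j = \<one>" using E.pow_mod[OF WN2, of j] True by simp
        have v0j: "v0 [^] j = \<one>" using E.pow_mod[OF v0N2, of j] True by simp
        have Ui: "U [^] i = \<one>" using ea Vj Uc by simp
        have Vi: "V [^] i = \<one>" using eb Wj Vc by simp
        show ?thesis
        proof (cases "p dvd i")
          case True
          have "u0 [^] i = \<one>" using E.pow_mod[OF u0N2, of i] True by simp
          then show ?thesis using ijh v0j N4c by auto
        next
          case False
          have "U \<in> {\<one>}" by (rule E.coprime_pow_in[OF pr UN2 triv_subgroup _ False]) (simp add: Ui)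
          then have U1: "U = \<one>" by simp
          have "V \<in> {\<one>}" by (rule E.coprime_pow_in[OF pr VN2 triv_subgroup _ False]) (simp add: Vi)
          then have V1: "V = \<one>" by simp
          have "T \<subseteq> TW"
          proof
            fix t assume "t \<in> T"
            then obtain l l' t' where "t = U [^] (l::nat) \<otimes> V [^] (l'::nat) \<otimes> t'" "t' \<in> TW" unfolding T_def spn_def by blast
            then show "t \<in> TW" using U1 V1 TWN4 N4c by auto
          qed
          then have "card N4 \<le> p" using cardsmall[OF _ WN4] N4T TW_def by blast
          then show ?thesis using cN4 p2p by simp
        qed
      qed
    qed
  qed
  show ?thesis using N4cent centN4 cN4 N4_def by blast
qed

end
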